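(* Assume (R). For every $n\ge0$, $$A_n(x)=(2x-1)^{\delta_n}\,F_n\big(x(x-1)\big).$$ Moreover $f_{n,0}=(-1)^n\alpha_n$ and $f_{n,d_n}=2^{-\delta_n}\alpha_0$; furthermore $$A_n(\phi)=(\sqrt5)^{\delta_n}F_n(1),\qquad \sum_{\nu=0}^{n}\binom{n}{\nu}\alpha_{n-\nu}\Phi_\nu=\begin{cases}2F_n(1),& n\text{ odd},\\ 0,& n\text{ even}.\end{cases}$$
   Context: Let $(\alpha_n)_{n\ge0}$ be an arbitrary sequence of complex numbers with Appell polynomials $A_n(x)=\sum_{\nu=0}^{n}\binom{n}{\nu}\alpha_{n-\nu}x^\nu$; property (R) means $A_n(1-x)=(-1)^nA_n(x)$ for all $n\ge0$. Let $S_n(x)=\sum_{k=0}^n s_{n,k}x^k$ with $s_{n,k}=\sum_{\nu=k}^{n}\binom{n}{\nu}\binom{\nu}{k}\alpha_\nu$. For $n\ge0$ let $d_n=\lfloor n/2\rfloor$, $\delta_n=1$ if $n$ odd and $0$ otherwise. The Faulhaber-type polynomial is $F_n(u)=\sum_{k\ge0}f_{n,k}u^k$ with $f_{n,k}=2^{2k-n}\sum_{\nu=0}^{d_n-k}\binom{n}{2\nu}\binom{d_n-\nu}{k}S_{2\nu}(1)$ for $0\le k\le d_n$ and $f_{n,k}=0$ for $k>d_n$. $\phi=(1+\sqrt5)/2$ is the golden ratio and $\Phi_\nu=(\phi^\nu-(1-\phi)^\nu)/\sqrt5$ are the Fibonacci numbers. *)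

theory Defs
  imports Complex_Main
begin

definition appell :: "(nat \<Rightarrow> complex) \<Rightarrow> nat \<Rightarrow> complex \<Rightarrow> complex" where
  "appell \<alpha> n x = (\<Sum>\<nu>=0..n. of_nat (n choose \<nu>) * \<alpha> (n - \<nu>) * x ^ \<nu>)"

definition propR :: "(nat \<Rightarrow> complex) \<Rightarrow> bool" where
  "propR \<alpha> \<longleftrightarrow> (\<forall>n x. appell \<alpha> n (1 - x) = (-1) ^ n * appell \<alpha> n x)"

definition s_coef :: "(nat \<Rightarrow> complex) \<Rightarrow> nat \<Rightarrow> nat \<Rightarrow> complex" where
  "s_coef \<alpha> n k = (\<Sum>\<nu>=k..n. of_nat (n choose \<nu>) * of_nat (\<nu> choose k) * \<alpha> \<nu>)"

definition S_poly :: "(nat \<Rightarrow> complex) \<Rightarrow> nat \<Rightarrow> complex \<Rightarrow> complex" where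
  "S_poly \<alpha> n x = (\<Sum>k=0..n. s_coef \<alpha> n k * x ^ k)"

definition dn :: "nat \<Rightarrow> nat" where "dn n = n div 2"

definition deltan :: "nat \<Rightarrow> nat" where "deltan n = (if odd n then 1 else 0)"

definition f_coef :: "(nat \<Rightarrow> complex) \<Rightarrow> nat \<Rightarrow> nat \<Rightarrow> complex" where
  "f_coef \<alpha> n k = (if k \<le> dn n then
      (2::complex) powi (2 * int k - int n) *
      (\<Sum>\<nu>=0..dn n - k. of_nat (n choose (2*\<nu>)) * of_nat ((dn n - \<nu>) choose k) * S_poly \<alpha> (2*\<nu>) 1)
    else 0)"

definition F_poly :: "(nat \<Rightarrow> complex) \<Rightarrow> nat \<Rightarrow> complex \<Rightarrow> complex" where
  "F_poly \<alpha> n u = (\<Sum>k=0..dn n. f_coef \<alpha> n k * u ^ k)"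

definition golden :: real where "golden = (1 + sqrt 5) / 2"

definition Fib_real :: "nat \<Rightarrow> real" where
  "Fib_real \<nu> = (golden ^ \<nu> - (1 - golden) ^ \<nu>) / sqrt 5"

end

theory Submission
  imports Defs
begin

lemma tri_sigma:
  fixes f :: "nat \<Rightarrow> nat \<Rightarrow> 'a::comm_monoid_add"
  shows "(\<Sum>i\<le>n. \<Sum>j\<le>n-i. f i j) = (\<Sum>(i,j)\<in>{(i,j). i+j \<le> n}. f i j)"
proof -
  have "Sigma {..n} (\<lambda>i. {..n-i}) = {(i,j). i+j \<le> n}" by auto
  then show ?thesis by (simp add: sum.Sigma)
qed

lemma tri_reindex:
  fixes f :: "nat \<Rightarrow> nat \<Rightarrow> 'a::comm_monoid_add"
  shows "(\<Sum>i\<le>n. \<Sum>j\<le>n-i. f i j) = (\<Sum>m\<le>n. \<Sum>i\<le>m. f i (m-i))"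
  unfolding tri_sigma by (rule sum.triangle_reindex_eq)

lemma tri_swap:
  fixes f :: "nat \<Rightarrow> nat \<Rightarrow> 'a::comm_monoid_add"
  shows "(\<Sum>i\<le>n. \<Sum>j\<le>n-i. f i j) = (\<Sum>j\<le>n. \<Sum>i\<le>n-j. f i j)"
proof -
  have "(\<Sum>(i,j)\<in>{(i,j). i+j \<le> n}. f i j) = (\<Sum>(j,i)\<in>{(j,i). j+i \<le> n}. f i j)"
    by (rule sum.reindex_bij_witness[where i=prod.swap and j=prod.swap]) auto
  then show ?thesis by (simp add: tri_sigma)
qed

lemma appell_shift:
  "appell \<alpha> n (a + b) = (\<Sum>k\<le>n. of_nat (n choose k) * appell \<alpha> (n-k) a * b^k)"
proof -
  define h where "h = (\<lambda>\<nu> k. of_nat (n choose \<nu>) * of_nat (\<nu> choose k) * \<alpha> (n-\<nu>) * b^k * a^(\<nu>-k))"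
  have "appell \<alpha> n (a+b) = (\<Sum>\<nu>\<le>n. \<Sum>k\<le>\<nu>. h \<nu> k)"
    unfolding appell_def h_def atLeast0AtMost
  proof (rule sum.cong[OF refl])
    fix \<nu> show "of_nat (n choose \<nu>) * \<alpha> (n - \<nu>) * (a + b) ^ \<nu> =
      (\<Sum>k\<le>\<nu>. of_nat (n choose \<nu>) * of_nat (\<nu> choose k) * \<alpha> (n - \<nu>) * b ^ k * a ^ (\<nu> - k))"
      unfolding add.commute[of a b] binomial_ring sum_distrib_left
      by (rule sum.cong[OF refl]) (simp only: mult_ac)
  qed
  also have "\<dots> = (\<Sum>k\<le>n. \<Sum>j\<le>n-k. h (k+j) k)"
    using tri_reindex[of "\<lambda>k j. h (k+j) k" n] by simp
  also have "\<dots> = (\<Sum>k\<le>n. of_nat (n choose k) * appell \<alpha> (n-k) a * b^k)"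
  proof (rule sum.cong[OF refl])
    fix k assume k: "k \<in> {..n}"
    show "(\<Sum>j\<le>n-k. h (k+j) k) = of_nat (n choose k) * appell \<alpha> (n-k) a * b^k"
      unfolding appell_def atLeast0AtMost sum_distrib_left sum_distrib_right
    proof (rule sum.cong[OF refl])
      fix j assume j: "j \<in> {..n-k}"
      have c: "(n choose (k+j)) * ((k+j) choose k) = (n choose k) * ((n-k) choose j)"
        using choose_mult[of k "k+j" n] j k by simp
      have c': "(of_nat (n choose (k+j)) :: complex) * of_nat ((k+j) choose k) = of_nat (n choose k) * of_nat ((n-k) choose j)"
        using arg_cong[OF c, of "of_nat :: nat \<Rightarrow> complex"] by simp
      have "h (k+j) k = (of_nat (n choose (k+j)) * of_nat ((k+j) choose k)) * \<alpha> (n-k-j) * b^k * a^j"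
        unfolding h_def by (simp add: diff_diff_add)
      also have "\<dots> = of_nat (n choose k) * (of_nat ((n-k) choose j) * \<alpha> (n-k-j) * a^j) * b^k"
        unfolding c' by (simp add: ac_simps)
      finally show "h (k+j) k = of_nat (n choose k) * (of_nat ((n-k) choose j) * \<alpha> (n-k-j) * a^j) * b^k" .
    qed
  qed
  finally show ?thesis .
qed

lemma swap_tri2:
  fixes g :: "nat \<Rightarrow> nat \<Rightarrow> 'a::comm_monoid_add"
  shows "(\<Sum>k\<le>m. \<Sum>\<nu>=k..m. g k \<nu>) = (\<Sum>\<nu>\<le>m. \<Sum>k\<le>\<nu>. g k \<nu>)"
proof -
  have 1: "Sigma {..m} (\<lambda>k. {k..m}) = {(k,\<nu>). k \<le> \<nu> \<and> \<nu> \<le> m}" by auto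
  have 2: "Sigma {..m} (\<lambda>\<nu>. {..\<nu>}) = {(\<nu>,k). k \<le> \<nu> \<and> \<nu> \<le> m}" by auto
  have "(\<Sum>(k,\<nu>)\<in>{(k,\<nu>). k \<le> \<nu> \<and> \<nu> \<le> m}. g k \<nu>) = (\<Sum>(\<nu>,k)\<in>{(\<nu>,k). k \<le> \<nu> \<and> \<nu> \<le> m}. g k \<nu>)"
    by (rule sum.reindex_bij_witness[where i=prod.swap and j=prod.swap]) auto
  then show ?thesis by (simp add: sum.Sigma 1 2)
qed

lemma S1: "S_poly \<alpha> m 1 = 2^m * appell \<alpha> m (1/2)"
proof -
  have "S_poly \<alpha> m 1 = (\<Sum>k\<le>m. \<Sum>\<nu>=k..m. of_nat (m choose \<nu>) * of_nat (\<nu> choose k) * \<alpha> \<nu>)"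
    unfolding S_poly_def s_coef_def atLeast0AtMost by simp
  also have "\<dots> = (\<Sum>\<nu>\<le>m. \<Sum>k\<le>\<nu>. of_nat (m choose \<nu>) * of_nat (\<nu> choose k) * \<alpha> \<nu>)"
    by (rule swap_tri2)
  also have "\<dots> = (\<Sum>\<nu>\<le>m. of_nat (m choose \<nu>) * 2^\<nu> * \<alpha> \<nu>)"
  proof (rule sum.cong[OF refl])
    fix \<nu>
    have "(\<Sum>k\<le>\<nu>. (of_nat (\<nu> choose k)::complex)) = 2^\<nu>"
      using arg_cong[OF choose_row_sum[of \<nu>], of "of_nat :: nat \<Rightarrow> complex"] by simp
    then show "(\<Sum>k\<le>\<nu>. of_nat (m choose \<nu>) * of_nat (\<nu> choose k) * \<alpha> \<nu>) = of_nat (m choose \<nu>) * 2^\<nu> * \<alpha> \<nu>"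
      by (simp add: sum_distrib_left[symmetric] sum_distrib_right[symmetric])
  qed
  also have "\<dots> = 2^m * appell \<alpha> m (1/2)"
  proof -
    have "appell \<alpha> m (1/2) = (\<Sum>\<nu>=0..m. of_nat (m choose (m-\<nu>)) * \<alpha> (m - (m-\<nu>)) * (1/2) ^ (m-\<nu>))"
      unfolding appell_def by (subst sum.atLeastAtMost_rev) simp
    also have "\<dots> = (\<Sum>\<nu>\<le>m. of_nat (m choose \<nu>) * \<alpha> \<nu> * (1/2) ^ (m-\<nu>))"
      unfolding atLeast0AtMost
      by (rule sum.cong[OF refl]) (simp add: binomial_symmetric[symmetric])
    finally have "2^m * appell \<alpha> m (1/2) = (\<Sum>\<nu>\<le>m. of_nat (m choose \<nu>) * \<alpha> \<nu> * (2^m * (1/2) ^ (m-\<nu>)))"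
      by (simp add: sum_distrib_left ac_simps)
    also have "\<dots> = (\<Sum>\<nu>\<le>m. of_nat (m choose \<nu>) * 2^\<nu> * \<alpha> \<nu>)"
    proof (rule sum.cong[OF refl])
      fix \<nu> assume "\<nu> \<in> {..m}"
      then have "(2::complex)^m = 2^\<nu> * 2^(m-\<nu>)" by (simp add: power_add[symmetric])
      then have "(2::complex)^m * (1/2)^(m-\<nu>) = 2^\<nu>" by (simp add: power_one_over)
      then show "of_nat (m choose \<nu>) * \<alpha> \<nu> * (2^m * (1/2) ^ (m-\<nu>)) = of_nat (m choose \<nu>) * 2^\<nu> * \<alpha> \<nu>"
        by simp
    qed
    finally show ?thesis by simp
  qed
  finally show ?thesis .
qed

lemma Bodd: "propR \<alpha> \<Longrightarrow> odd m \<Longrightarrow> appell \<alpha> m (1/2) = 0"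
proof -
  assume R: "propR \<alpha>" and o: "odd m"
  have "appell \<alpha> m (1 - 1/2) = (-1)^m * appell \<alpha> m (1/2)"
    using R unfolding propR_def by blast
  then have "appell \<alpha> m (1/2) = - appell \<alpha> m (1/2)" using o by simp
  then show ?thesis by simp
qed

lemma evens:
  fixes g :: "nat \<Rightarrow> complex"
  assumes "\<And>j. odd j \<Longrightarrow> g j = 0"
  shows "(\<Sum>j\<le>n. g j) = (\<Sum>\<nu>\<le>dn n. g (2*\<nu>))"
proof -
  have "(\<Sum>\<nu>\<le>dn n. g (2*\<nu>)) = (\<Sum>j\<in>(\<lambda>\<nu>. 2*\<nu>) ` {..dn n}. g j)"
    by (subst sum.reindex) (auto simp: inj_on_def)
  also have "\<dots> = (\<Sum>j\<le>n. g j)"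
  proof (rule sum.mono_neutral_left)
    show "(\<lambda>\<nu>. 2*\<nu>) ` {..dn n} \<subseteq> {..n}" by (auto simp: dn_def)
    show "\<forall>i\<in>{..n} - (\<lambda>\<nu>. 2*\<nu>) ` {..dn n}. g i = 0"
    proof
      fix i assume i: "i \<in> {..n} - (\<lambda>\<nu>. 2*\<nu>) ` {..dn n}"
      have "odd i"
      proof
        assume "even i"
        then obtain \<nu> where "i = 2*\<nu>" by blast
        with i show False by (auto simp: dn_def)
      qed
      then show "g i = 0" by (rule assms)
    qed
  qed simp
  finally show ?thesis by simp
qed

lemma A_even:
  assumes R: "propR \<alpha>"
  shows "appell \<alpha> n x = (\<Sum>\<nu>\<le>dn n. of_nat (n choose (2*\<nu>)) * appell \<alpha> (2*\<nu>) (1/2) * (x-1/2)^(n-2*\<nu>))"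
proof -
  have "appell \<alpha> n x = appell \<alpha> n (1/2 + (x - 1/2))" by simp
  also have "\<dots> = (\<Sum>k\<le>n. of_nat (n choose k) * appell \<alpha> (n-k) (1/2) * (x-1/2)^k)"
    by (rule appell_shift)
  also have "\<dots> = (\<Sum>j\<le>n. of_nat (n choose j) * appell \<alpha> j (1/2) * (x-1/2)^(n-j))"
    unfolding atLeast0AtMost[symmetric]
    by (subst sum.atLeastAtMost_rev) (auto intro!: sum.cong simp: binomial_symmetric[symmetric])
  also have "\<dots> = (\<Sum>\<nu>\<le>dn n. of_nat (n choose (2*\<nu>)) * appell \<alpha> (2*\<nu>) (1/2) * (x-1/2)^(n-2*\<nu>))"
    by (rule evens) (simp add: Bodd[OF R])
  finally show ?thesis .
qed


lemma pw:
  assumes "k + \<nu> \<le> dn n"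
  shows "(1/2::complex)^deltan n * (1/4)^(dn n - \<nu> - k) = 2 powi (2*int k - int n) * 2^(2*\<nu>)"
proof -
  have n: "n = 2 * dn n + deltan n" by (simp add: dn_def deltan_def)
  have e: "(2*int k - int n) + int (2*\<nu>) = - int (deltan n + 2*(dn n - \<nu> - k))"
  proof -
    have a: "int n = 2 * int (dn n) + int (deltan n)" using n by linarith
    have b: "int (dn n - \<nu> - k) = int (dn n) - int \<nu> - int k" using assms by auto
    show ?thesis unfolding of_nat_add of_nat_mult b a by simp
  qed
  have "(2::complex) powi (2*int k - int n) * 2^(2*\<nu>) = 2 powi ((2*int k - int n) + int (2*\<nu>))"
    by (subst power_int_add) (simp_all only: power_int_of_nat, simp)
  also have "\<dots> = inverse (2 ^ (deltan n + 2*(dn n - \<nu> - k)))"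
    by (simp only: e power_int_minus power_int_of_nat)
  also have "\<dots> = (1/2::complex)^deltan n * (1/4)^(dn n - \<nu> - k)"
    by (simp add: power_add power_mult power_one_over inverse_eq_divide)
  finally show ?thesis by simp
qed

lemma claim1:
  assumes R: "propR \<alpha>"
  shows "appell \<alpha> n x = (2 * x - 1) ^ deltan n * F_poly \<alpha> n (x * (x - 1))"
proof -
  define u where "u = x * (x - 1)"
  define d where "d = dn n"
  define B where "B = (\<lambda>m. appell \<alpha> m (1/2))"
  have n: "n = 2 * d + deltan n" by (simp add: d_def dn_def deltan_def)
  have y2: "(x - 1/2)^2 = u + 1/4" by (simp add: u_def power2_eq_square algebra_simps)
  have ypow: "(x - 1/2)^(n - 2*\<nu>) = (2*x-1)^deltan n * ((1/2)^deltan n * (u + 1/4)^(d-\<nu>))"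
    if "\<nu> \<le> d" for \<nu>
  proof -
    have "n - 2*\<nu> = deltan n + 2*(d-\<nu>)" using that by (subst n) simp
    then have "(x - 1/2)^(n - 2*\<nu>) = (x-1/2)^deltan n * ((x-1/2)^2)^(d-\<nu>)"
      by (simp add: power_add power_mult)
    also have "(x-1/2)^deltan n = (2*x-1)^deltan n * (1/2)^deltan n"
      by (simp add: power_mult_distrib[symmetric] algebra_simps)
    finally show ?thesis unfolding y2 by simp
  qed
  define T where "T = (\<lambda>\<nu> k. of_nat (n choose (2*\<nu>)) * B (2*\<nu>) * (of_nat ((d-\<nu>) choose k) * u^k * ((1/2)^deltan n * (1/4)^(d-\<nu>-k))))"
  have "appell \<alpha> n x = (\<Sum>\<nu>\<le>d. of_nat (n choose (2*\<nu>)) * B (2*\<nu>) * (x-1/2)^(n-2*\<nu>))"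
    unfolding d_def B_def by (rule A_even[OF R])
  also have "\<dots> = (2*x-1)^deltan n * (\<Sum>\<nu>\<le>d. \<Sum>k\<le>d-\<nu>. T \<nu> k)"
    unfolding sum_distrib_left
  proof (rule sum.cong[OF refl])
    fix \<nu> assume "\<nu> \<in> {..d}"
    then have "(x-1/2)^(n-2*\<nu>) = (2*x-1)^deltan n * ((1/2)^deltan n * (u + 1/4)^(d-\<nu>))"
      by (simp add: ypow)
    also have "(u + 1/4)^(d-\<nu>) = (\<Sum>k\<le>d-\<nu>. of_nat ((d-\<nu>) choose k) * u^k * (1/4)^(d-\<nu>-k))"
      by (rule binomial_ring)
    finally have e: "(x-1/2)^(n-2*\<nu>) = (2*x-1)^deltan n * ((1/2)^deltan n * (\<Sum>k\<le>d-\<nu>. of_nat ((d-\<nu>) choose k) * u^k * (1/4)^(d-\<nu>-k)))" .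
    show "of_nat (n choose (2*\<nu>)) * B (2*\<nu>) * (x-1/2)^(n-2*\<nu>) = (\<Sum>k\<le>d-\<nu>. (2*x-1)^deltan n * T \<nu> k)"
      unfolding e T_def sum_distrib_left sum_distrib_right
      by (intro sum.cong refl) (simp only: mult_ac)
  qed
  also have "(\<Sum>\<nu>\<le>d. \<Sum>k\<le>d-\<nu>. T \<nu> k) = (\<Sum>k\<le>d. \<Sum>\<nu>\<le>d-k. T \<nu> k)"
    by (rule tri_swap)
  also have "\<dots> = F_poly \<alpha> n u"
    unfolding F_poly_def atLeast0AtMost d_def[symmetric]
  proof (rule sum.cong[OF refl])
    fix k assume k: "k \<in> {..d}"
    have "f_coef \<alpha> n k * u^k = (\<Sum>\<nu>\<le>d-k. 2 powi (2*int k - int n) * of_nat (n choose (2*\<nu>)) * of_nat ((d-\<nu>) choose k) * (2^(2*\<nu>) * B (2*\<nu>)) * u^k)"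
      using k unfolding f_coef_def d_def[symmetric] atLeast0AtMost S1 B_def
      by (simp add: sum_distrib_left sum_distrib_right mult.assoc)
    also have "\<dots> = (\<Sum>\<nu>\<le>d-k. T \<nu> k)"
    proof (rule sum.cong[OF refl])
      fix \<nu> assume "\<nu> \<in> {..d-k}"
      then have "k + \<nu> \<le> dn n" using k by (simp add: d_def)
      from pw[OF this] have p: "(1/2::complex)^deltan n * (1/4)^(d - \<nu> - k) = 2 powi (2*int k - int n) * 2^(2*\<nu>)"
        by (simp add: d_def)
      show "2 powi (2*int k - int n) * of_nat (n choose (2*\<nu>)) * of_nat ((d-\<nu>) choose k) * (2^(2*\<nu>) * B (2*\<nu>)) * u^k = T \<nu> k"
        unfolding T_def p by (simp only: mult_ac)
    qed
    finally show "(\<Sum>\<nu>\<le>d-k. T \<nu> k) = f_coef \<alpha> n k * u^k" by simp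
  qed
  finally show ?thesis by (simp add: u_def)
qed


lemma golden_props: "golden * (golden - 1) = 1" "2 * golden - 1 = sqrt 5"
proof -
  have s: "sqrt 5 * sqrt 5 = (5::real)" by simp
  show "golden * (golden - 1) = 1" unfolding golden_def
    by (simp add: field_simps s algebra_simps)
  show "2 * golden - 1 = sqrt 5" unfolding golden_def by (simp add: field_simps)
qed

theorem mainTheorem13:
  fixes \<alpha> :: "nat \<Rightarrow> complex"
  assumes R: "propR \<alpha>"
  shows "(\<forall>n x. appell \<alpha> n x = (2 * x - 1) ^ deltan n * F_poly \<alpha> n (x * (x - 1)))
    \<and> (\<forall>n. f_coef \<alpha> n 0 = (-1) ^ n * \<alpha> n)
    \<and> (\<forall>n. f_coef \<alpha> n (dn n) = (2::complex) powi (- int (deltan n)) * \<alpha> 0)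
    \<and> (\<forall>n. appell \<alpha> n (of_real golden) = (of_real (sqrt 5)) ^ deltan n * F_poly \<alpha> n 1)
    \<and> (\<forall>n. (\<Sum>\<nu>=0..n. of_nat (n choose \<nu>) * \<alpha> (n - \<nu>) * of_real (Fib_real \<nu>))
            = (if odd n then 2 * F_poly \<alpha> n 1 else 0))"
proof (intro conjI allI)
  fix n x show "appell \<alpha> n x = (2 * x - 1) ^ deltan n * F_poly \<alpha> n (x * (x - 1))"
    by (rule claim1[OF R])
next
  fix n
  have a0: "appell \<alpha> n 0 = \<alpha> n" unfolding appell_def atLeast0AtMost
    by (subst sum.atMost_shift) simp
  have F0: "F_poly \<alpha> n 0 = f_coef \<alpha> n 0" unfolding F_poly_def atLeast0AtMost
    by (subst sum.atMost_shift) simp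
  have "\<alpha> n = (-1) ^ deltan n * f_coef \<alpha> n 0"
    using claim1[OF R, of n 0] a0 F0 by simp
  moreover have "(-1::complex)^deltan n = (-1)^n"
    by (cases "even n") (auto simp: deltan_def)
  ultimately show "f_coef \<alpha> n 0 = (-1) ^ n * \<alpha> n"
    by (metis (no_types, lifting) mult.assoc mult_1 power_minus1_even power_minus1_odd power_mult_distrib power_one mult.commute power2_eq_square)
next
  fix n
  have e: "2 * int (dn n) - int n = - int (deltan n)" by (auto simp: dn_def deltan_def elim!: evenE oddE)
  show "f_coef \<alpha> n (dn n) = (2::complex) powi (- int (deltan n)) * \<alpha> 0"
    unfolding f_coef_def e by (simp add: S_poly_def s_coef_def)
next
  fix n
  have "appell \<alpha> n (of_real golden) = (2 * of_real golden - 1) ^ deltan n * F_poly \<alpha> n (of_real golden * (of_real golden - 1))"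
    by (rule claim1[OF R])
  also have "of_real golden * (of_real golden - 1) = (of_real (golden * (golden - 1)) :: complex)" by simp
  also have "2 * of_real golden - 1 = (of_real (2 * golden - 1) :: complex)" by simp
  finally show "appell \<alpha> n (of_real golden) = (of_real (sqrt 5)) ^ deltan n * F_poly \<alpha> n 1"
    by (simp add: golden_props)
next
  fix n
  define p where "p = (of_real golden :: complex)"
  define s where "s = (of_real (sqrt 5) :: complex)"
  have s0: "s \<noteq> 0" by (simp add: s_def)
  have q: "(of_real (1 - golden) :: complex) = 1 - p" by (simp add: p_def)
  have Ap: "appell \<alpha> n p = s ^ deltan n * F_poly \<alpha> n 1"
  proof -
    have "appell \<alpha> n p = (2 * p - 1) ^ deltan n * F_poly \<alpha> n (p * (p - 1))"
      by (rule claim1[OF R])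
    also have "p * (p - 1) = (of_real (golden * (golden - 1)) :: complex)" by (simp add: p_def)
    also have "2 * p - 1 = (of_real (2 * golden - 1) :: complex)" by (simp add: p_def)
    finally show ?thesis by (simp add: golden_props s_def)
  qed
  have Aq: "appell \<alpha> n (1 - p) = (-1)^n * appell \<alpha> n p"
    using R unfolding propR_def by blast
  have "(\<Sum>\<nu>=0..n. of_nat (n choose \<nu>) * \<alpha> (n - \<nu>) * of_real (Fib_real \<nu>))
      = (\<Sum>\<nu>=0..n. (of_nat (n choose \<nu>) * \<alpha> (n - \<nu>) * p^\<nu> - of_nat (n choose \<nu>) * \<alpha> (n - \<nu>) * (1-p)^\<nu>) / s)"
    by (rule sum.cong[OF refl]) (simp add: Fib_real_def q[symmetric] s_def p_def algebra_simps diff_divide_distrib)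
  also have "\<dots> = (appell \<alpha> n p - appell \<alpha> n (1 - p)) / s"
    unfolding appell_def by (simp add: sum_divide_distrib[symmetric] sum_subtractf)
  also have "\<dots> = (if odd n then 2 * F_poly \<alpha> n 1 else 0)"
    using s0 by (cases "even n") (auto simp: Aq Ap deltan_def)
  finally show "(\<Sum>\<nu>=0..n. of_nat (n choose \<nu>) * \<alpha> (n - \<nu>) * of_real (Fib_real \<nu>))
            = (if odd n then 2 * F_poly \<alpha> n 1 else 0)" .
qed

end
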